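(* Let $S$ be an anti-rectangular AG-groupoid. Every ideal of $S$ is prime if and only if every ideal of $S$ is idempotent and the set of ideals of $S$ is totally ordered under inclusion (for any ideals $I,J$, either $I\subseteq J$ or $J\subseteq I$).
   Context: An AG-groupoid is a set $S$ with a binary operation satisfying $(ab)c=(cb)a$ for all $a,b,c\in S$. It is anti-rectangular if $a=(ba)b$ for all $a,b\in S$. For nonempty subsets, $AB=\{ab:a\in A,b\in B\}$, $I^{2}=II$. An ideal of $S$ is a nonempty subset $I$ with $SI\subseteq I$ and $IS\subseteq I$; it is idempotent if $I^{2}=I$. An ideal $P$ is prime if for all ideals $A,B$ of $S$, $AB\subseteq P$ implies $A\subseteq P$ or $B\subseteq P$. *)

theory Defs
  imports Main
begin

definition AG_groupoid :: "'a set \<Rightarrow> ('a \<Rightarrow> 'a \<Rightarrow> 'a) \<Rightarrow> bool" where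
  "AG_groupoid S m \<longleftrightarrow> (\<forall>a\<in>S. \<forall>b\<in>S. m a b \<in> S) \<and>
     (\<forall>a\<in>S. \<forall>b\<in>S. \<forall>c\<in>S. m (m a b) c = m (m c b) a)"

definition anti_rectangular :: "'a set \<Rightarrow> ('a \<Rightarrow> 'a \<Rightarrow> 'a) \<Rightarrow> bool" where
  "anti_rectangular S m \<longleftrightarrow> (\<forall>a\<in>S. \<forall>b\<in>S. a = m (m b a) b)"

definition setmult :: "('a \<Rightarrow> 'a \<Rightarrow> 'a) \<Rightarrow> 'a set \<Rightarrow> 'a set \<Rightarrow> 'a set" where
  "setmult m A B = {m a b | a b. a \<in> A \<and> b \<in> B}"

definition is_ideal :: "'a set \<Rightarrow> ('a \<Rightarrow> 'a \<Rightarrow> 'a) \<Rightarrow> 'a set \<Rightarrow> bool" where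
  "is_ideal S m I \<longleftrightarrow> I \<noteq> {} \<and> I \<subseteq> S \<and> setmult m S I \<subseteq> I \<and> setmult m I S \<subseteq> I"

definition idempotent_ideal :: "'a set \<Rightarrow> ('a \<Rightarrow> 'a \<Rightarrow> 'a) \<Rightarrow> 'a set \<Rightarrow> bool" where
  "idempotent_ideal S m I \<longleftrightarrow> is_ideal S m I \<and> setmult m I I = I"

definition prime_ideal :: "'a set \<Rightarrow> ('a \<Rightarrow> 'a \<Rightarrow> 'a) \<Rightarrow> 'a set \<Rightarrow> bool" where
  "prime_ideal S m P \<longleftrightarrow> is_ideal S m P \<and>
     (\<forall>A B. is_ideal S m A \<longrightarrow> is_ideal S m B \<longrightarrow> setmult m A B \<subseteq> P \<longrightarrow> A \<subseteq> P \<or> B \<subseteq> P)"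

end

theory Submission
  imports Defs
begin

lemma mem_sm: "x \<in> setmult m A B \<longleftrightarrow> (\<exists>a\<in>A. \<exists>b\<in>B. x = m a b)"
  unfolding setmult_def by auto

lemma sm_I: "a \<in> A \<Longrightarrow> b \<in> B \<Longrightarrow> m a b \<in> setmult m A B"
  by (auto simp: mem_sm)

lemma sm_mono: "A \<subseteq> A' \<Longrightarrow> B \<subseteq> B' \<Longrightarrow> setmult m A B \<subseteq> setmult m A' B'"
  unfolding mem_sm subset_iff by blast

lemma id_left: "is_ideal S m I \<Longrightarrow> a \<in> I \<Longrightarrow> b \<in> S \<Longrightarrow> m a b \<in> I"
  unfolding is_ideal_def using sm_I[of a I b S m] by (elim conjE) (rule subsetD)

lemma id_right: "is_ideal S m I \<Longrightarrow> a \<in> S \<Longrightarrow> b \<in> I \<Longrightarrow> m a b \<in> I"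
  unfolding is_ideal_def using sm_I[of a S b I m] by (elim conjE) (rule subsetD)

lemma id_sub: "is_ideal S m I \<Longrightarrow> I \<subseteq> S"
  unfolding is_ideal_def by blast

lemma sm_sub: "is_ideal S m I \<Longrightarrow> is_ideal S m J \<Longrightarrow> setmult m I J \<subseteq> I \<inter> J"
proof
  fix x assume I: "is_ideal S m I" and J: "is_ideal S m J" and x: "x \<in> setmult m I J"
  then obtain a b where "a \<in> I" "b \<in> J" "x = m a b" by (auto simp: mem_sm)
  thus "x \<in> I \<inter> J" using id_left[OF I] id_right[OF J] id_sub[OF I] id_sub[OF J] by auto
qed

lemma idem:
  assumes "anti_rectangular S m" "is_ideal S m I"
  shows "setmult m I I = I"
proof
  show "setmult m I I \<subseteq> I" using sm_sub[OF assms(2) assms(2)] by simp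
  show "I \<subseteq> setmult m I I"
  proof
    fix a assume a: "a \<in> I"
    with assms(2) have aS: "a \<in> S" using id_sub by blast
    have maa: "m a a \<in> I" using id_left[OF assms(2) a aS] .
    have eq: "a = m (m a a) a" using assms(1) aS unfolding anti_rectangular_def by simp
    have "m (m a a) a \<in> setmult m I I" using maa a by (rule sm_I)
    then show "a \<in> setmult m I I" using eq by simp
  qed
qed

theorem theorem5:
  fixes S :: "'a set" and m :: "'a \<Rightarrow> 'a \<Rightarrow> 'a"
  assumes "AG_groupoid S m" and "anti_rectangular S m"
  shows "(\<forall>P. is_ideal S m P \<longrightarrow> prime_ideal S m P) \<longleftrightarrow>
         ((\<forall>I. is_ideal S m I \<longrightarrow> idempotent_ideal S m I) \<and>
          (\<forall>I J. is_ideal S m I \<longrightarrow> is_ideal S m J \<longrightarrow> I \<subseteq> J \<or> J \<subseteq> I))"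
proof
  assume H: "\<forall>P. is_ideal S m P \<longrightarrow> prime_ideal S m P"
  show "(\<forall>I. is_ideal S m I \<longrightarrow> idempotent_ideal S m I) \<and>
          (\<forall>I J. is_ideal S m I \<longrightarrow> is_ideal S m J \<longrightarrow> I \<subseteq> J \<or> J \<subseteq> I)"
  proof (intro conjI allI impI)
    fix I assume "is_ideal S m I"
    then show "idempotent_ideal S m I" using idem[OF assms(2)] unfolding idempotent_ideal_def by simp
  next
    fix I J assume I: "is_ideal S m I" and J: "is_ideal S m J"
    obtain a b where a: "a \<in> I" and b: "b \<in> J" using I J unfolding is_ideal_def by blast
    have ne: "I \<inter> J \<noteq> {}" using sm_sub[OF I J] sm_I[OF a b] by blast
    have K: "is_ideal S m (I \<inter> J)"
      unfolding is_ideal_def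
    proof (intro conjI ne subsetI)
      fix x assume "x \<in> I \<inter> J" thus "x \<in> S" using id_sub[OF I] by blast
    next
      fix x assume "x \<in> setmult m S (I \<inter> J)"
      then obtain a b where "a \<in> S" "b \<in> I \<inter> J" "x = m a b" by (auto simp: mem_sm)
      thus "x \<in> I \<inter> J" using id_right[OF I] id_right[OF J] by auto
    next
      fix x assume "x \<in> setmult m (I \<inter> J) S"
      then obtain a b where "a \<in> I \<inter> J" "b \<in> S" "x = m a b" by (auto simp: mem_sm)
      thus "x \<in> I \<inter> J" using id_left[OF I] id_left[OF J] by auto
    qed
    have "prime_ideal S m (I \<inter> J)" using H K by simp
    then have X: "\<forall>A B. is_ideal S m A \<longrightarrow> is_ideal S m B \<longrightarrow> setmult m A B \<subseteq> I \<inter> J \<longrightarrow> A \<subseteq> I \<inter> J \<or> B \<subseteq> I \<inter> J"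
      unfolding prime_ideal_def by simp
    have "I \<subseteq> I \<inter> J \<or> J \<subseteq> I \<inter> J" using X[rule_format, OF I J sm_sub[OF I J]] .
    thus "I \<subseteq> J \<or> J \<subseteq> I" by blast
  qed
next
  assume H: "(\<forall>I. is_ideal S m I \<longrightarrow> idempotent_ideal S m I) \<and>
          (\<forall>I J. is_ideal S m I \<longrightarrow> is_ideal S m J \<longrightarrow> I \<subseteq> J \<or> J \<subseteq> I)"
  show "\<forall>P. is_ideal S m P \<longrightarrow> prime_ideal S m P"
  proof (intro allI impI)
    fix P assume P: "is_ideal S m P"
    show "prime_ideal S m P" unfolding prime_ideal_def
    proof (intro conjI allI impI P)
      fix A B assume A: "is_ideal S m A" and B: "is_ideal S m B" and AB: "setmult m A B \<subseteq> P"
      have iA: "setmult m A A = A" using idem[OF assms(2) A] .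
      have iB: "setmult m B B = B" using idem[OF assms(2) B] .
      from H A B have "A \<subseteq> B \<or> B \<subseteq> A" by simp
      thus "A \<subseteq> P \<or> B \<subseteq> P"
      proof
        assume "A \<subseteq> B"
        hence "setmult m A A \<subseteq> setmult m A B" using sm_mono by blast
        thus ?thesis using iA AB by blast
      next
        assume "B \<subseteq> A"
        hence "setmult m B B \<subseteq> setmult m A B" using sm_mono by blast
        thus ?thesis using iB AB by blast
      qed
    qed
  qed
qed

end
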